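(* Let $t_1,\dots,t_n,s_1,\dots,s_n>0$. Then $(K^n,|\cdot|_{t_1}\times\cdots\times|\cdot|_{t_n})$ and $(K^n,|\cdot|_{s_1}\times\cdots\times|\cdot|_{s_n})$ are isometrically isomorphic if and only if, after a suitable permutation of $s_1,\dots,s_n$, one has $t_i/s_i\in V_K$ for each $i=1,\dots,n$.
   Context: $K$ is a complete non-archimedean non-trivially valued field which is not spherically complete, with valuation group $V_K=\{|x|:x\in K\setminus\{0\}\}$. $(K^n,|\cdot|_{t_1}\times\cdots\times|\cdot|_{t_n})$ denotes $K^n$ with norm $\|(x_1,\dots,x_n)\|=\max_it_i|x_i|$. *)

theory Defs
  imports Complex_Main "HOL-Combinatorics.Permutations"
begin

definition nonarch_abs :: "('a::field \<Rightarrow> real) \<Rightarrow> bool" where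
  "nonarch_abs v \<longleftrightarrow>
     (\<forall>x. v x \<ge> 0) \<and> (\<forall>x. v x = 0 \<longleftrightarrow> x = 0) \<and>
     (\<forall>x y. v (x * y) = v x * v y) \<and>
     (\<forall>x y. v (x + y) \<le> max (v x) (v y))"

definition nontrivial_abs :: "('a::field \<Rightarrow> real) \<Rightarrow> bool" where
  "nontrivial_abs v \<longleftrightarrow> (\<exists>x. x \<noteq> 0 \<and> v x \<noteq> 1)"

definition complete_abs :: "('a::field \<Rightarrow> real) \<Rightarrow> bool" where
  "complete_abs v \<longleftrightarrow>
     (\<forall>X :: nat \<Rightarrow> 'a.
        (\<forall>e>0. \<exists>N. \<forall>m\<ge>N. \<forall>k\<ge>N. v (X m - X k) < e) \<longrightarrow>
        (\<exists>L. \<forall>e>0. \<exists>N. \<forall>m\<ge>N. v (X m - L) < e))"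

definition closed_ball_v :: "('a::field \<Rightarrow> real) \<Rightarrow> 'a \<Rightarrow> real \<Rightarrow> 'a set" where
  "closed_ball_v v a r = {y. v (y - a) \<le> r}"

definition spherically_complete :: "('a::field \<Rightarrow> real) \<Rightarrow> bool" where
  "spherically_complete v \<longleftrightarrow>
     (\<forall>C. C \<noteq> {} \<and> (\<forall>B\<in>C. \<exists>a r. r > 0 \<and> B = closed_ball_v v a r) \<and>
          (\<forall>A\<in>C. \<forall>B\<in>C. A \<subseteq> B \<or> B \<subseteq> A) \<longrightarrow> \<Inter>C \<noteq> {})"

definition value_group :: "('a::field \<Rightarrow> real) \<Rightarrow> real set" where
  "value_group v = {v x | x. x \<noteq> 0}"

definition Kn :: "nat \<Rightarrow> (nat \<Rightarrow> 'a::field) set" where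
  "Kn n = {x. \<forall>i\<ge>n. x i = 0}"

definition wnorm :: "('a::field \<Rightarrow> real) \<Rightarrow> nat \<Rightarrow> (nat \<Rightarrow> real) \<Rightarrow> (nat \<Rightarrow> 'a) \<Rightarrow> real" where
  "wnorm v n t x = Max (insert 0 {t i * v (x i) | i. i < n})"

definition isometric_iso ::
  "('a::field \<Rightarrow> real) \<Rightarrow> nat \<Rightarrow> (nat \<Rightarrow> real) \<Rightarrow> (nat \<Rightarrow> real) \<Rightarrow> bool" where
  "isometric_iso v n t s \<longleftrightarrow>
     (\<exists>T :: (nat \<Rightarrow> 'a) \<Rightarrow> (nat \<Rightarrow> 'a).
        bij_betw T (Kn n) (Kn n) \<and>
        (\<forall>x\<in>Kn n. \<forall>y\<in>Kn n. T (\<lambda>i. x i + y i) = (\<lambda>i. T x i + T y i)) \<and>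
        (\<forall>c. \<forall>x\<in>Kn n. T (\<lambda>i. c * x i) = (\<lambda>i. c * T x i)) \<and>
        (\<forall>x\<in>Kn n. wnorm v n s (T x) = wnorm v n t x))"

end

theory Submission
  imports Defs
begin

lemma vb:
  assumes "nonarch_abs v"
  shows v_nonneg: "v x \<ge> 0" and v_zero_iff: "v x = 0 \<longleftrightarrow> x = 0"
    and v_mult: "v (x * y) = v x * v y" and v_add: "v (x + y) \<le> max (v x) (v y)"
  using assms unfolding nonarch_abs_def by auto

lemma v0: "nonarch_abs v \<Longrightarrow> v 0 = 0" using vb(2) by blast

lemma v1: assumes "nonarch_abs v" shows "v 1 = 1"
proof -
  have "v 1 = v 1 * v 1" using vb(3)[OF assms, of 1 1] by simp
  moreover have "v 1 \<noteq> 0" using vb(2)[OF assms, of 1] by simp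
  ultimately show ?thesis
    by (metis mult_cancel_right1)
qed

lemma v_pos: "nonarch_abs v \<Longrightarrow> x \<noteq> 0 \<Longrightarrow> v x > 0"
  using vb(1,2) by (metis less_eq_real_def)

lemma v_neg: assumes "nonarch_abs v" shows "v (- x) = v x"
proof -
  have "v (-1) * v (-1) = 1" using vb(3)[OF assms, of "-1" "-1"] v1[OF assms] by simp
  moreover have "v (-1) \<ge> 0" using vb(1)[OF assms] by blast
  ultimately have "v (-1) = 1"
    using power2_eq_1_iff[of "v (-1)"] by (auto simp: power2_eq_square)
  then show ?thesis using vb(3)[OF assms, of "-1" x] by simp
qed

lemma v_inv: assumes "nonarch_abs v" shows "v (inverse x) = 1 / v x"
proof (cases "x = 0")
  case True then show ?thesis using v0[OF assms] by simp
next
  case False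
  have "v (inverse x) * v x = 1" using vb(3)[OF assms, of "inverse x" x] v1[OF assms] False by simp
  then show ?thesis using False vb(2)[OF assms, of x] by (simp add: eq_divide_eq)
qed

lemma v_div: assumes "nonarch_abs v" shows "v (x / y) = v x / v y"
  using vb(3)[OF assms, of x "inverse y"] v_inv[OF assms, of y] by (simp add: divide_inverse)

lemma v_diff: assumes "nonarch_abs v" shows "v (x - y) \<le> max (v x) (v y)"
  using vb(4)[OF assms, of x "-y"] v_neg[OF assms, of y] by simp

lemma v_sum_le:
  assumes "nonarch_abs v" "finite R" "0 \<le> c" "\<forall>j\<in>R. v (f j) \<le> c"
  shows "v (sum f R) \<le> c"
  using assms(2,4)
proof (induction R rule: finite_induct)
  case empty then show ?case using v0[OF assms(1)] assms(3) by simp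
next
  case (insert x F)
  then show ?case using vb(4)[OF assms(1), of "f x" "sum f F"] by (auto simp: max_def split: if_splits)
qed

lemma v_sum_less:
  assumes "nonarch_abs v" "finite R" "0 < c" "\<forall>j\<in>R. v (f j) < c"
  shows "v (sum f R) < c"
  using assms(2,4)
proof (induction R rule: finite_induct)
  case empty then show ?case using v0[OF assms(1)] assms(3) by simp
next
  case (insert x F)
  then show ?case using vb(4)[OF assms(1), of "f x" "sum f F"] by (auto simp: max_def split: if_splits)
qed

lemma elim_lemma:
  assumes nv: "nonarch_abs v"
  shows "finite J \<Longrightarrow> finite R \<Longrightarrow> card J < card R \<Longrightarrow> (\<forall>j\<in>R. \<forall>i\<in>J. v (u j i) \<le> 1) \<Longrightarrow>
    \<exists>a. (\<forall>j\<in>R. v (a j) \<le> 1) \<and> (\<exists>j\<in>R. v (a j) = 1) \<and> (\<forall>i\<in>J. v (\<Sum>j\<in>R. a j * u j i) < 1)"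
proof (induction J arbitrary: R u rule: finite_induct)
  case empty
  then obtain j0 where j0: "j0 \<in> R" by fastforce
  show ?case
    by (rule exI[of _ "\<lambda>j. if j = j0 then 1 else 0"]) (use j0 v0[OF nv] v1[OF nv] in auto)
next
  case (insert i J)
  have cJ: "card J < card R" using insert by simp
  show ?case
  proof (cases "\<forall>j\<in>R. v (u j i) < 1")
    case True
    have "\<exists>a. (\<forall>j\<in>R. v (a j) \<le> 1) \<and> (\<exists>j\<in>R. v (a j) = 1) \<and> (\<forall>i\<in>J. v (\<Sum>j\<in>R. a j * u j i) < 1)"
      using insert.IH[OF insert.prems(1) cJ, of u] insert.prems(3) by auto
    then obtain a where
      a: "\<forall>j\<in>R. v (a j) \<le> 1" "\<exists>j\<in>R. v (a j) = 1" "\<forall>i\<in>J. v (\<Sum>j\<in>R. a j * u j i) < 1"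
      by auto
    have "\<forall>j\<in>R. v (a j * u j i) < 1"
    proof
      fix j assume j: "j \<in> R"
      have "v (a j) * v (u j i) \<le> 1 * v (u j i)"
        using a(1) j vb(1)[OF nv] by (intro mult_right_mono) auto
      then show "v (a j * u j i) < 1" using True j vb(3)[OF nv] by fastforce
    qed
    then have "v (\<Sum>j\<in>R. a j * u j i) < 1" using v_sum_less[OF nv insert.prems(1)] by simp
    then show ?thesis using a by auto
  next
    case False
    then obtain j0 where j0: "j0 \<in> R" "v (u j0 i) = 1" using insert.prems(3) by force
    have u0: "u j0 i \<noteq> 0" using j0 v0[OF nv] by auto
    define R' where "R' = R - {j0}"
    define u' where "u' = (\<lambda>j k. u j k - (u j i / u j0 i) * u j0 k)"
    have fR': "finite R'" using insert.prems(1) R'_def by simp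
    have cR': "card J < card R'" using insert j0 R'_def by simp
    have cb: "v (u j i / u j0 i) \<le> 1" if "j \<in> R" for j
      using v_div[OF nv] j0 insert.prems(3) that by simp
    have bnd: "\<forall>j\<in>R'. \<forall>k\<in>J. v (u' j k) \<le> 1"
    proof (intro ballI)
      fix j k assume j: "j \<in> R'" and k: "k \<in> J"
      have jR: "j \<in> R" using j R'_def by simp
      have "v ((u j i / u j0 i) * u j0 k) = v (u j i / u j0 i) * v (u j0 k)" by (rule vb(3)[OF nv])
      also have "\<dots> \<le> 1"
        using cb[OF jR] insert.prems(3) j0(1) k vb(1)[OF nv]
        by (intro mult_le_one) auto
      finally have "v ((u j i / u j0 i) * u j0 k) \<le> 1" .
      then show "v (u' j k) \<le> 1" unfolding u'_def
        using v_diff[OF nv, of "u j k" "(u j i / u j0 i) * u j0 k"] insert.prems(3) jR k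
        by (smt (verit, best) insert_iff)
    qed
    from insert.IH[OF fR' cR' bnd] obtain b where
      b: "\<forall>j\<in>R'. v (b j) \<le> 1" "\<exists>j\<in>R'. v (b j) = 1" "\<forall>k\<in>J. v (\<Sum>j\<in>R'. b j * u' j k) < 1"
      by auto
    define a where "a = (\<lambda>j. if j = j0 then - (\<Sum>j\<in>R'. b j * (u j i / u j0 i)) else b j)"
    have key: "(\<Sum>j\<in>R. a j * u j k) = (\<Sum>j\<in>R'. b j * u' j k)" for k
    proof -
      have "(\<Sum>j\<in>R. a j * u j k) = a j0 * u j0 k + (\<Sum>j\<in>R'. a j * u j k)"
        using sum.remove[OF insert.prems(1) j0(1)] R'_def by simp
      also have "(\<Sum>j\<in>R'. a j * u j k) = (\<Sum>j\<in>R'. b j * u j k)"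
        by (rule sum.cong) (auto simp: a_def R'_def)
      also have "(\<Sum>j\<in>R'. b j * u' j k) = (\<Sum>j\<in>R'. b j * u j k) - (\<Sum>j\<in>R'. b j * (u j i / u j0 i)) * u j0 k"
      proof -
        have "(\<Sum>j\<in>R'. b j * u' j k) = (\<Sum>j\<in>R'. b j * u j k - (b j * (u j i / u j0 i)) * u j0 k)"
          by (rule sum.cong) (simp_all add: u'_def algebra_simps)
        also have "\<dots> = (\<Sum>j\<in>R'. b j * u j k) - (\<Sum>j\<in>R'. b j * (u j i / u j0 i)) * u j0 k"
          by (simp only: sum_subtractf sum_distrib_right)
        finally show ?thesis .
      qed
      ultimately show ?thesis by (simp add: a_def)
    qed
    have a1: "\<forall>j\<in>R. v (a j) \<le> 1"
    proof
      fix j assume j: "j \<in> R"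
      show "v (a j) \<le> 1"
      proof (cases "j = j0")
        case True
        have "\<forall>j\<in>R'. v (b j * (u j i / u j0 i)) \<le> 1"
        proof
          fix j assume j: "j \<in> R'"
          have "v (b j * (u j i / u j0 i)) = v (b j) * v (u j i / u j0 i)" by (rule vb(3)[OF nv])
          also have "\<dots> \<le> 1" using b(1) cb vb(1)[OF nv] R'_def j by (intro mult_le_one) auto
          finally show "v (b j * (u j i / u j0 i)) \<le> 1" .
        qed
        then have "v (\<Sum>j\<in>R'. b j * (u j i / u j0 i)) \<le> 1" using v_sum_le[OF nv fR'] by simp
        then show ?thesis using True a_def v_neg[OF nv] by simp
      next
        case False then show ?thesis using b(1) j R'_def a_def by simp
      qed
    qed
    have a2: "\<exists>j\<in>R. v (a j) = 1" using b(2) R'_def a_def by auto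
    have a3: "\<forall>k\<in>insert i J. v (\<Sum>j\<in>R. a j * u j k) < 1"
    proof
      fix k assume k: "k \<in> insert i J"
      show "v (\<Sum>j\<in>R. a j * u j k) < 1"
      proof (cases "k = i")
        case True
        have "(\<Sum>j\<in>R'. b j * u' j i) = 0" unfolding u'_def using u0 by simp
        then show ?thesis using key True v0[OF nv] by simp
      next
        case False then show ?thesis using key b(3) k by simp
      qed
    qed
    show ?thesis using a1 a2 a3 by blast
  qed
qed

lemma wnorm_set: "{t i * v (y i) | i. i < n} = (\<lambda>i. t i * v (y i)) ` {..<n}" by auto

lemma wnorm_le_iff: "wnorm v n t y \<le> r \<longleftrightarrow> 0 \<le> r \<and> (\<forall>i<n. t i * v (y i) \<le> r)"
  unfolding wnorm_def wnorm_set by (subst Max_le_iff) auto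

lemma wnorm_less_iff: "wnorm v n t y < r \<longleftrightarrow> 0 < r \<and> (\<forall>i<n. t i * v (y i) < r)"
  unfolding wnorm_def wnorm_set by (subst Max_less_iff) auto

lemma wnorm_eq: "0 \<le> r \<Longrightarrow> \<forall>i<n. t i * v (y i) \<le> r \<Longrightarrow> k < n \<Longrightarrow> t k * v (y k) = r
   \<Longrightarrow> wnorm v n t y = r"
  unfolding wnorm_def wnorm_set by (rule Max_eqI) auto

definition orthfam where
  "orthfam v n t r m x \<longleftrightarrow> (\<forall>j<m. x j \<in> Kn n) \<and> (\<forall>j<m. wnorm v n t (x j) \<le> r) \<and>
     (\<forall>a. (\<forall>j<m. v (a j) \<le> 1) \<and> (\<exists>j<m. v (a j) = 1) \<longrightarrow> wnorm v n t (\<lambda>i. \<Sum>j<m. a j * x j i) = r)"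

lemma orth_upper:
  assumes nv: "nonarch_abs v" and tp: "\<forall>i<n. t i > 0" and rp: "r > 0"
    and of: "orthfam v n t r m x"
  shows "m \<le> card {i. i < n \<and> r / t i \<in> value_group v}"
proof (rule ccontr)
  define J where "J = {i. i < n \<and> r / t i \<in> value_group v}"
  have fJ: "finite J" unfolding J_def by simp
  assume "\<not> m \<le> card {i. i < n \<and> r / t i \<in> value_group v}"
  then have cJ: "card J < card {..<m}" unfolding J_def by simp
  define lam where "lam i = (SOME l. l \<noteq> 0 \<and> v l = r / t i)" for i
  have lam: "lam i \<noteq> 0 \<and> v (lam i) = r / t i" if "i \<in> J" for i
  proof -
    have "\<exists>l. l \<noteq> 0 \<and> v l = r / t i" using that unfolding J_def value_group_def by auto
    then show ?thesis unfolding lam_def by (rule someI_ex)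
  qed
  define u where "u j i = x j i / lam i" for j i
  have xb: "t i * v (x j i) \<le> r" if "j < m" "i < n" for i j
    using of that unfolding orthfam_def wnorm_le_iff by auto
  have ub: "\<forall>j\<in>{..<m}. \<forall>i\<in>J. v (u j i) \<le> 1"
  proof (intro ballI)
    fix j i assume j: "j \<in> {..<m}" and i: "i \<in> J"
    have ti: "t i > 0" using tp i unfolding J_def by auto
    have "v (x j i) \<le> r / t i" using xb[of j i] j i ti unfolding J_def by (simp add: field_simps)
    moreover have "r / t i > 0" using rp ti by simp
    moreover have "v (u j i) = v (x j i) / (r / t i)" unfolding u_def v_div[OF nv] using lam[OF i] by simp
    ultimately show "v (u j i) \<le> 1" by (simp only: divide_le_eq_1_pos)
  qed
  obtain a where a: "\<forall>j\<in>{..<m}. v (a j) \<le> 1" "\<exists>j\<in>{..<m}. v (a j) = 1"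
    "\<forall>i\<in>J. v (\<Sum>j\<in>{..<m}. a j * u j i) < 1"
    using elim_lemma[OF nv fJ _ cJ ub] by auto
  define y where "y = (\<lambda>i. \<Sum>j<m. a j * x j i)"
  have "wnorm v n t y = r" using of a unfolding orthfam_def y_def by auto
  moreover have "wnorm v n t y < r" unfolding wnorm_less_iff
  proof (intro conjI allI impI rp)
    fix i assume i: "i < n"
    have ti: "t i > 0" using tp i by auto
    show "t i * v (y i) < r"
    proof (cases "i \<in> J")
      case True
      have "y i = (\<Sum>j<m. a j * u j i) * lam i"
        unfolding y_def u_def sum_distrib_right using lam[OF True] by (intro sum.cong) auto
      then have "v (y i) = v (\<Sum>j<m. a j * u j i) * (r / t i)" using vb(3)[OF nv] lam[OF True] by simp
      also have "\<dots> < 1 * (r / t i)" using a(3) True rp ti by (intro mult_strict_right_mono) auto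
      finally show ?thesis using ti by (simp add: field_simps)
    next
      case False
      have "\<forall>j\<in>{..<m}. v (a j * x j i) \<le> r / t i"
      proof
        fix j assume j: "j \<in> {..<m}"
        have "v (a j * x j i) = v (a j) * v (x j i)" by (rule vb(3)[OF nv])
        also have "\<dots> \<le> 1 * v (x j i)" using a(1) j vb(1)[OF nv] by (intro mult_right_mono) auto
        also have "\<dots> \<le> r / t i" using xb[of j i] j i ti by (simp add: field_simps)
        finally show "v (a j * x j i) \<le> r / t i" .
      qed
      then have "v (y i) \<le> r / t i" unfolding y_def using v_sum_le[OF nv, of "{..<m}" "r / t i"] rp ti by simp
      then have le: "t i * v (y i) \<le> r" using ti by (simp add: field_simps)
      show ?thesis
      proof (cases "y i = 0")
        case True then show ?thesis using v0[OF nv] rp by simp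
      next
        case nz: False
        have "t i * v (y i) \<noteq> r"
        proof
          assume "t i * v (y i) = r"
          then have "r / t i = v (y i)" using ti by (simp add: field_simps)
          then have "r / t i \<in> value_group v" using nz unfolding value_group_def by auto
          then show False using False i unfolding J_def by simp
        qed
        then show ?thesis using le by simp
      qed
    qed
  qed
  ultimately show False by simp
qed

lemma orth_exists:
  assumes nv: "nonarch_abs v" and tp: "\<forall>i<n. t i > 0" and rp: "r > 0"
  shows "\<exists>x. orthfam v n t r (card {i. i < n \<and> r / t i \<in> value_group v}) x"
proof -
  define J where "J = {i. i < n \<and> r / t i \<in> value_group v}"
  have fJ: "finite J" unfolding J_def by simp
  obtain h where h: "bij_betw h {..<card J} J" using ex_bij_betw_nat_finite[OF fJ] by (auto simp: atLeast0LessThan)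
  define lam where "lam i = (SOME l. l \<noteq> 0 \<and> v l = r / t i)" for i
  have lam: "lam i \<noteq> 0 \<and> v (lam i) = r / t i" if "i \<in> J" for i
  proof -
    have "\<exists>l. l \<noteq> 0 \<and> v l = r / t i" using that unfolding J_def value_group_def by auto
    then show ?thesis unfolding lam_def by (rule someI_ex)
  qed
  have hJ: "h j \<in> J" if "j < card J" for j using h that by (auto simp: bij_betw_def)
  have hn: "h j < n" if "j < card J" for j using hJ[OF that] unfolding J_def by auto
  have hinj: "h j = h j' \<Longrightarrow> j < card J \<Longrightarrow> j' < card J \<Longrightarrow> j = j'" for j j'
    using h by (auto simp: bij_betw_def inj_on_def)
  have tl: "t i * v (lam i) = r" if "i \<in> J" for i
    using lam[OF that] tp that unfolding J_def by auto
  define x where "x j = (\<lambda>i. if i = h j then lam i else 0)" for j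
  have sumx: "(\<Sum>j<card J. a j * x j i) = (if i \<in> J then a (inv_into {..<card J} h i) * lam i else 0)" for a i
  proof (cases "i \<in> J")
    case True
    define j0 where "j0 = inv_into {..<card J} h i"
    have "j0 \<in> {..<card J}" unfolding j0_def
      by (rule inv_into_into) (use True h in \<open>auto simp: bij_betw_def\<close>)
    moreover have "h j0 = i" unfolding j0_def
      by (rule f_inv_into_f) (use True h in \<open>auto simp: bij_betw_def\<close>)
    ultimately have j0: "j0 < card J" "h j0 = i" by auto
    have "(\<Sum>j<card J. a j * x j i) = a j0 * x j0 i + (\<Sum>j\<in>{..<card J} - {j0}. a j * x j i)"
      using sum.remove[of "{..<card J}" j0] j0 by simp
    also have "(\<Sum>j\<in>{..<card J} - {j0}. a j * x j i) = 0"
      using hinj j0 unfolding x_def by (intro sum.neutral) auto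
    finally show ?thesis using True j0 unfolding x_def j0_def by simp
  next
    case False
    then have "\<forall>j<card J. x j i = 0" using hJ unfolding x_def by auto
    then show ?thesis using False by simp
  qed
  have "orthfam v n t r (card J) x" unfolding orthfam_def
  proof (intro conjI allI impI)
    fix j assume j: "j < card J"
    show "x j \<in> Kn n" unfolding Kn_def x_def using hn[OF j] by auto
    show "wnorm v n t (x j) \<le> r" unfolding wnorm_le_iff
      using rp tl[OF hJ[OF j]] v0[OF nv] unfolding x_def by auto
  next
    fix a assume a: "(\<forall>j<card J. v (a j) \<le> 1) \<and> (\<exists>j<card J. v (a j) = 1)"
    then obtain j0 where j0: "j0 < card J" "v (a j0) = 1" by auto
    have vy: "t i * v (\<Sum>j<card J. a j * x j i) = (if i \<in> J then v (a (inv_into {..<card J} h i)) * r else 0)" for i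
      unfolding sumx using vb(3)[OF nv] tl v0[OF nv] by auto
    show "wnorm v n t (\<lambda>i. \<Sum>j<card J. a j * x j i) = r"
    proof (rule wnorm_eq[where k = "h j0"])
      show "0 \<le> r" using rp by simp
      show "h j0 < n" using hn[OF j0(1)] .
      have "inv_into {..<card J} h (h j0) = j0" using h j0 by (auto simp: bij_betw_def)
      then show "t (h j0) * v (\<Sum>j<card J. a j * x j (h j0)) = r" unfolding vy using hJ[OF j0(1)] j0 by simp
      show "\<forall>i<n. t i * v (\<Sum>j<card J. a j * x j i) \<le> r"
      proof (intro allI impI)
        fix i assume "i < n"
        show "t i * v (\<Sum>j<card J. a j * x j i) \<le> r"
        proof (cases "i \<in> J")
          case True
          have "inv_into {..<card J} h i \<in> {..<card J}"
            by (rule inv_into_into) (use True h in \<open>auto simp: bij_betw_def\<close>)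
          then have "inv_into {..<card J} h i < card J" by simp
          then have "v (a (inv_into {..<card J} h i)) * r \<le> 1 * r" using a rp by (intro mult_right_mono) auto
          then show ?thesis unfolding vy using True by simp
        qed (use rp vy in simp)
      qed
    qed
  qed
  then show ?thesis unfolding J_def by blast
qed

lemma T_comb:
  fixes m :: nat and T :: "(nat \<Rightarrow> 'a::field) \<Rightarrow> nat \<Rightarrow> 'a"
  assumes add: "\<forall>x\<in>Kn n. \<forall>y\<in>Kn n. T (\<lambda>i. x i + y i) = (\<lambda>i. T x i + T y i)"
    and smul: "\<forall>c. \<forall>x\<in>Kn n. T (\<lambda>i. c * x i) = (\<lambda>i. c * T x i)"
    and xK: "\<forall>j<m. x j \<in> Kn n"
  shows "(\<lambda>i. \<Sum>j<m. a j * x j i) \<in> Kn n \<and> T (\<lambda>i. \<Sum>j<m. a j * x j i) = (\<lambda>i. \<Sum>j<m. a j * T (x j) i)"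
  using xK
proof (induction m)
  case 0
  have z: "(\<lambda>i. 0::'a) \<in> Kn n" unfolding Kn_def by simp
  have h0: "\<forall>x\<in>Kn n. T (\<lambda>i. (0::'a) * x i) = (\<lambda>i. 0 * T x i)" using smul by (rule spec)
  have "T (\<lambda>i. 0 * (0::'a)) = (\<lambda>i. 0 * T (\<lambda>i. 0) i)" using bspec[OF h0 z] by simp
  then show ?case using z by simp
next
  case (Suc m)
  have IH: "(\<lambda>i. \<Sum>j<m. a j * x j i) \<in> Kn n \<and> T (\<lambda>i. \<Sum>j<m. a j * x j i) = (\<lambda>i. \<Sum>j<m. a j * T (x j) i)"
    using Suc by auto
  have xm: "x m \<in> Kn n" using Suc.prems by auto
  have sm: "(\<lambda>i. a m * x m i) \<in> Kn n" using xm unfolding Kn_def by auto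
  have K: "(\<lambda>i. \<Sum>j<Suc m. a j * x j i) \<in> Kn n" using IH sm unfolding Kn_def by auto
  have "T (\<lambda>i. \<Sum>j<Suc m. a j * x j i) = T (\<lambda>i. (\<Sum>j<m. a j * x j i) + a m * x m i)" by simp
  also have "\<dots> = (\<lambda>i. T (\<lambda>i. \<Sum>j<m. a j * x j i) i + T (\<lambda>i. a m * x m i) i)"
    using add[rule_format, OF IH[THEN conjunct1] sm] by simp
  also have "\<dots> = (\<lambda>i. \<Sum>j<Suc m. a j * T (x j) i)" using IH smul xm by simp
  finally show ?case using K by simp
qed

lemma iso_count_le:
  assumes nv: "nonarch_abs v" and tp: "\<forall>i<n. t i > 0" and sp: "\<forall>i<n. s i > 0" and rp: "r > 0"
    and iso: "isometric_iso v n t s"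
  shows "card {i. i < n \<and> r / t i \<in> value_group v} \<le> card {i. i < n \<and> r / s i \<in> value_group v}"
proof -
  obtain T where T: "bij_betw T (Kn n) (Kn n)"
    "\<forall>x\<in>Kn n. \<forall>y\<in>Kn n. T (\<lambda>i. x i + y i) = (\<lambda>i. T x i + T y i)"
    "\<forall>c. \<forall>x\<in>Kn n. T (\<lambda>i. c * x i) = (\<lambda>i. c * T x i)"
    "\<forall>x\<in>Kn n. wnorm v n s (T x) = wnorm v n t x"
    using iso unfolding isometric_iso_def by blast
  let ?m = "card {i. i < n \<and> r / t i \<in> value_group v}"
  obtain x where x: "orthfam v n t r ?m x" using orth_exists[OF nv tp rp] by blast
  have "orthfam v n s r ?m (\<lambda>j. T (x j))" unfolding orthfam_def
  proof (intro conjI allI impI)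
    fix j assume j: "j < ?m"
    have xj: "x j \<in> Kn n" using x j unfolding orthfam_def by auto
    show "T (x j) \<in> Kn n" using bij_betwE[OF T(1)] xj by blast
    have "wnorm v n s (T (x j)) = wnorm v n t (x j)" using T(4) xj by blast
    moreover have "wnorm v n t (x j) \<le> r" using x j unfolding orthfam_def by blast
    ultimately show "wnorm v n s (T (x j)) \<le> r" by simp
  next
    fix a assume a: "(\<forall>j<?m. v (a j) \<le> 1) \<and> (\<exists>j<?m. v (a j) = 1)"
    have xK: "\<forall>j<?m. x j \<in> Kn n" using x unfolding orthfam_def by auto
    note c = T_comb[OF T(2) T(3) xK, of a]
    have "wnorm v n s (\<lambda>i. \<Sum>j<?m. a j * T (x j) i) = wnorm v n t (\<lambda>i. \<Sum>j<?m. a j * x j i)"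
    proof -
      have e1: "wnorm v n s (T (\<lambda>i. \<Sum>j<?m. a j * x j i)) = wnorm v n t (\<lambda>i. \<Sum>j<?m. a j * x j i)"
        by (rule T(4)[rule_format, OF c[THEN conjunct1]])
      then show ?thesis using c[THEN conjunct2] by simp
    qed
    also have "\<dots> = r" using x a unfolding orthfam_def by blast
    finally show "wnorm v n s (\<lambda>i. \<Sum>j<?m. a j * T (x j) i) = r" .
  qed
  then show ?thesis by (rule orth_upper[OF nv sp rp])
qed

lemma addK: "x \<in> Kn n \<Longrightarrow> y \<in> Kn n \<Longrightarrow> (\<lambda>i. x i + y i) \<in> Kn n"
  unfolding Kn_def by auto
lemma smK: "x \<in> Kn n \<Longrightarrow> (\<lambda>i. c * x i) \<in> Kn n"
  unfolding Kn_def by auto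

lemma iso_sym:
  fixes v :: "'a::field \<Rightarrow> real"
  assumes iso: "isometric_iso v n t s"
  shows "isometric_iso v n s t"
proof -
  obtain T where T: "bij_betw T (Kn n) (Kn n)"
    "\<forall>x\<in>Kn n. \<forall>y\<in>Kn n. T (\<lambda>i. x i + y i) = (\<lambda>i. T x i + T y i)"
    "\<forall>c. \<forall>x\<in>Kn n. T (\<lambda>i. c * x i) = (\<lambda>i. c * T x i)"
    "\<forall>x\<in>Kn n. wnorm v n s (T x) = wnorm v n t x"
    using iso unfolding isometric_iso_def by blast
  define S where "S = inv_into (Kn n) T"
  have S1: "bij_betw S (Kn n) (Kn n)" unfolding S_def by (rule bij_betw_inv_into[OF T(1)])
  have SK: "S y \<in> Kn n" if "y \<in> Kn n" for y using bij_betwE[OF S1] that by blast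
  have TS: "T (S y) = y" if "y \<in> Kn n" for y
    unfolding S_def using f_inv_into_f[of y T "Kn n"] T(1) that by (simp add: bij_betw_def)
  have ST: "S (T x) = x" if "x \<in> Kn n" for x
    unfolding S_def using inv_into_f_f[of T "Kn n" x] T(1) that by (simp add: bij_betw_def)
  have "\<forall>x\<in>Kn n. \<forall>y\<in>Kn n. S (\<lambda>i. x i + y i) = (\<lambda>i. S x i + S y i)"
  proof (intro ballI)
    fix x y :: "nat \<Rightarrow> 'a" assume xy: "x \<in> Kn n" "y \<in> Kn n"
    have "T (\<lambda>i. S x i + S y i) = (\<lambda>i. T (S x) i + T (S y) i)"
      using T(2) SK[OF xy(1)] SK[OF xy(2)] by blast
    also have "\<dots> = (\<lambda>i. x i + y i)" using TS xy by simp
    finally have e: "T (\<lambda>i. S x i + S y i) = (\<lambda>i. x i + y i)" .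
    have "S (\<lambda>i. x i + y i) = S (T (\<lambda>i. S x i + S y i))" using e by simp
    also have "\<dots> = (\<lambda>i. S x i + S y i)" by (rule ST[OF addK[OF SK[OF xy(1)] SK[OF xy(2)]]])
    finally show "S (\<lambda>i. x i + y i) = (\<lambda>i. S x i + S y i)" .
  qed
  moreover have "\<forall>c. \<forall>x\<in>Kn n. S (\<lambda>i. c * x i) = (\<lambda>i. c * S x i)"
  proof (intro allI ballI)
    fix c and x :: "nat \<Rightarrow> 'a" assume x: "x \<in> Kn n"
    have "T (\<lambda>i. c * S x i) = (\<lambda>i. c * T (S x) i)" using T(3) SK[OF x] by blast
    also have "\<dots> = (\<lambda>i. c * x i)" using TS x by simp
    finally have e: "T (\<lambda>i. c * S x i) = (\<lambda>i. c * x i)" .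
    have "S (\<lambda>i. c * x i) = S (T (\<lambda>i. c * S x i))" using e by simp
    also have "\<dots> = (\<lambda>i. c * S x i)" by (rule ST[OF smK[OF SK[OF x]]])
    finally show "S (\<lambda>i. c * x i) = (\<lambda>i. c * S x i)" .
  qed
  moreover have "\<forall>x\<in>Kn n. wnorm v n t (S x) = wnorm v n s x"
  proof
    fix x :: "nat \<Rightarrow> 'a" assume x: "x \<in> Kn n"
    have "wnorm v n s (T (S x)) = wnorm v n t (S x)" using T(4) SK[OF x] by blast
    then show "wnorm v n t (S x) = wnorm v n s x" using TS[OF x] by simp
  qed
  ultimately show ?thesis unfolding isometric_iso_def using S1 by blast
qed

lemma card_Suc_split: "card {i. i < Suc n \<and> P i} = card {i. i < n \<and> P i} + (if P n then 1 else 0)"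
proof (cases "P n")
  case True
  then have "{i. i < Suc n \<and> P i} = insert n {i. i < n \<and> P i}" by (auto simp: less_Suc_eq)
  then show ?thesis using True by simp
next
  case False
  then have "{i. i < Suc n \<and> P i} = {i. i < n \<and> P i}" by (auto simp: less_Suc_eq)
  then show ?thesis using False by simp
qed

lemma perm_match:
  fixes t s :: "nat \<Rightarrow> real" and G :: "real set"
  assumes G1: "1 \<in> G" and Gm: "\<And>x y. x \<in> G \<Longrightarrow> y \<in> G \<Longrightarrow> x * y \<in> G"
    and Gi: "\<And>x. x \<in> G \<Longrightarrow> 1 / x \<in> G"
  shows "\<forall>i<n. t i > 0 \<Longrightarrow> \<forall>i<n. s i > 0 \<Longrightarrow>
    \<forall>r>0. card {i. i < n \<and> r / t i \<in> G} = card {i. i < n \<and> r / s i \<in> G} \<Longrightarrow>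
    \<exists>\<sigma>. \<sigma> permutes {..<n} \<and> (\<forall>i<n. t i / s (\<sigma> i) \<in> G)"
proof (induction n arbitrary: s)
  case 0 show ?case by (intro exI[of _ id]) auto
next
  case (Suc n)
  have tn: "t n > 0" using Suc.prems by simp
  have "n \<in> {i. i < Suc n \<and> t n / t i \<in> G}" using tn G1 by simp
  then have "card {i. i < Suc n \<and> t n / t i \<in> G} \<noteq> 0" by (auto simp: card_eq_0_iff)
  then have "card {i. i < Suc n \<and> t n / s i \<in> G} \<noteq> 0" using Suc.prems(3) tn by simp
  then have "{i. i < Suc n \<and> t n / s i \<in> G} \<noteq> {}" by (metis card.empty)
  then obtain j where j: "j < Suc n" "t n / s j \<in> G" by blast
  define \<tau> where "\<tau> = Transposition.transpose j n"
  define s' where "s' = s \<circ> \<tau>"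
  have \<tau>p: "\<tau> permutes {..<Suc n}" unfolding \<tau>_def using j by (intro permutes_swap_id) auto
  have \<tau>inv: "\<tau> (\<tau> i) = i" for i unfolding \<tau>_def by simp
  have \<tau>lt: "\<tau> i < Suc n \<longleftrightarrow> i < Suc n" for i using permutes_in_image[OF \<tau>p, of i] by simp
  have cnt_eq: "card {i. i < Suc n \<and> r / s' i \<in> G} = card {i. i < Suc n \<and> r / s i \<in> G}" for r
  proof -
    have "{i. i < Suc n \<and> r / s' i \<in> G} = \<tau> ` {i. i < Suc n \<and> r / s i \<in> G}"
    proof (intro set_eqI iffI)
      fix x assume "x \<in> {i. i < Suc n \<and> r / s' i \<in> G}"
      then have "\<tau> x \<in> {i. i < Suc n \<and> r / s i \<in> G}" using \<tau>lt unfolding s'_def by simp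
      then show "x \<in> \<tau> ` {i. i < Suc n \<and> r / s i \<in> G}" using \<tau>inv[of x] by (metis image_eqI)
    next
      fix x assume "x \<in> \<tau> ` {i. i < Suc n \<and> r / s i \<in> G}"
      then show "x \<in> {i. i < Suc n \<and> r / s' i \<in> G}" using \<tau>lt \<tau>inv unfolding s'_def by auto
    qed
    then show ?thesis using permutes_inj[OF \<tau>p] by (simp add: card_image inj_on_def)
  qed
  have s'p: "\<forall>i<Suc n. s' i > 0" using Suc.prems(2) \<tau>lt unfolding s'_def by simp
  have s'n: "s' n = s j" unfolding s'_def \<tau>_def by simp
  have sj: "s j > 0" using Suc.prems(2) j by simp
  have IHp: "\<forall>r>0. card {i. i < n \<and> r / t i \<in> G} = card {i. i < n \<and> r / s' i \<in> G}"
  proof (intro allI impI)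
    fix r :: real assume r: "r > 0"
    have e1: "r / s' n = (r / t n) * (t n / s j)" using s'n tn sj by simp
    have e2: "r / t n = (r / s' n) * (1 / (t n / s j))" using s'n tn sj by simp
    have iff: "(r / t n \<in> G) = (r / s' n \<in> G)"
      using e1 e2 Gm Gi j(2) by metis
    have "card {i. i < Suc n \<and> r / t i \<in> G} = card {i. i < Suc n \<and> r / s' i \<in> G}"
      using Suc.prems(3) r cnt_eq by simp
    then show "card {i. i < n \<and> r / t i \<in> G} = card {i. i < n \<and> r / s' i \<in> G}"
      unfolding card_Suc_split using iff by simp
  qed
  obtain \<sigma>' where \<sigma>': "\<sigma>' permutes {..<n}" "\<forall>i<n. t i / s' (\<sigma>' i) \<in> G"
    using Suc.IH[of s'] Suc.prems(1) s'p IHp by auto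
  define \<sigma> where "\<sigma> = \<tau> \<circ> \<sigma>'"
  have "\<sigma> permutes {..<Suc n}" unfolding \<sigma>_def
    by (rule permutes_compose[OF permutes_subset[OF \<sigma>'(1)] \<tau>p]) auto
  moreover have "\<forall>i<Suc n. t i / s (\<sigma> i) \<in> G"
  proof (intro allI impI)
    fix i assume i: "i < Suc n"
    have eq: "s (\<sigma> i) = s' (\<sigma>' i)" unfolding \<sigma>_def s'_def by simp
    show "t i / s (\<sigma> i) \<in> G"
    proof (cases "i < n")
      case True then show ?thesis using \<sigma>'(2) eq by simp
    next
      case False
      then have "i = n" using i by simp
      moreover have "\<sigma>' n = n" using permutes_not_in[OF \<sigma>'(1)] by simp
      ultimately show ?thesis using eq s'n j(2) by simp
    qed
  qed
  ultimately show ?case by blast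
qed

lemma vg_1: "nonarch_abs v \<Longrightarrow> 1 \<in> value_group v"
  unfolding value_group_def using v1 by force

lemma vg_mult: "nonarch_abs v \<Longrightarrow> x \<in> value_group v \<Longrightarrow> y \<in> value_group v \<Longrightarrow> x * y \<in> value_group v"
proof -
  assume nv: "nonarch_abs v" and x: "x \<in> value_group v" and y: "y \<in> value_group v"
  obtain a where a: "a \<noteq> 0" "x = v a" using x unfolding value_group_def by auto
  obtain b where b: "b \<noteq> 0" "y = v b" using y unfolding value_group_def by auto
  have "v (a * b) = x * y" using vb(3)[OF nv] a b by simp
  moreover have "a * b \<noteq> 0" using a b by simp
  ultimately show ?thesis unfolding value_group_def mem_Collect_eq by (intro exI[of _ "a * b"]) simp
qed

lemma vg_inv: assumes nv: "nonarch_abs v" and x: "x \<in> value_group v" shows "1 / x \<in> value_group v"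
proof -
  obtain a where a: "a \<noteq> 0" "x = v a" using x unfolding value_group_def by auto
  have "v (inverse a) = 1 / x" using v_inv[OF nv] a by simp
  moreover have "inverse a \<noteq> 0" using a by simp
  ultimately show ?thesis unfolding value_group_def mem_Collect_eq by (intro exI[of _ "inverse a"]) simp
qed

lemma iso_from_perm:
  fixes v :: "'a::field \<Rightarrow> real"
  assumes nv: "nonarch_abs v" and tp: "\<forall>i<n. t i > 0" and sp: "\<forall>i<n. s i > 0"
    and sig: "\<sigma> permutes {..<n}" and tv: "\<forall>i<n. t i / s (\<sigma> i) \<in> value_group v"
  shows "isometric_iso v n t s"
proof -
  define \<rho> where "\<rho> = inv \<sigma>"
  have \<rho>\<sigma>: "\<rho> (\<sigma> i) = i" "\<sigma> (\<rho> i) = i" for i unfolding \<rho>_def using permutes_inverses[OF sig] by auto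
  have \<rho>p: "\<rho> permutes {..<n}" unfolding \<rho>_def by (rule permutes_inv[OF sig])
  have \<rho>lt: "\<rho> k < n" if "k < n" for k using permutes_in_image[OF \<rho>p, of k] that by simp
  have \<sigma>lt: "\<sigma> k < n" if "k < n" for k using permutes_in_image[OF sig, of k] that by simp
  have \<sigma>n: "\<sigma> k = k" if "\<not> k < n" for k using permutes_not_in[OF sig, of k] that by simp
  define c where "c k = (if k < n then SOME l. l \<noteq> 0 \<and> v l = t (\<rho> k) / s k else 0)" for k
  have c: "c k \<noteq> 0 \<and> v (c k) = t (\<rho> k) / s k" if "k < n" for k
  proof -
    have "t (\<rho> k) / s (\<sigma> (\<rho> k)) \<in> value_group v" using tv \<rho>lt[OF that] by simp
    then have "\<exists>l. l \<noteq> 0 \<and> v l = t (\<rho> k) / s k" unfolding value_group_def \<rho>\<sigma> by auto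
    then have "(SOME l. l \<noteq> 0 \<and> v l = t (\<rho> k) / s k) \<noteq> 0 \<and> v (SOME l. l \<noteq> 0 \<and> v l = t (\<rho> k) / s k) = t (\<rho> k) / s k"
      by (rule someI_ex)
    then show ?thesis unfolding c_def using that by simp
  qed
  have cn: "c k = 0" if "\<not> k < n" for k unfolding c_def using that by simp
  define T where "T x = (\<lambda>k. c k * x (\<rho> k))" for x :: "nat \<Rightarrow> 'a"
  define S where "S y = (\<lambda>i. y (\<sigma> i) / c (\<sigma> i))" for y :: "nat \<Rightarrow> 'a"
  have TK: "T ` Kn n \<subseteq> Kn n" unfolding T_def Kn_def using cn by auto
  have SK: "S ` Kn n \<subseteq> Kn n" unfolding S_def Kn_def using \<sigma>n by auto
  have ST: "\<forall>x\<in>Kn n. S (T x) = x"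
  proof
    fix x :: "nat \<Rightarrow> 'a" assume x: "x \<in> Kn n"
    show "S (T x) = x"
    proof
      fix i show "S (T x) i = x i"
      proof (cases "i < n")
        case True then show ?thesis unfolding S_def T_def using c[OF \<sigma>lt[OF True]] \<rho>\<sigma> by simp
      next
        case False then show ?thesis unfolding S_def T_def using x \<sigma>n cn unfolding Kn_def by simp
      qed
    qed
  qed
  have TS: "\<forall>y\<in>Kn n. T (S y) = y"
  proof
    fix y :: "nat \<Rightarrow> 'a" assume y: "y \<in> Kn n"
    show "T (S y) = y"
    proof
      fix k show "T (S y) k = y k"
      proof (cases "k < n")
        case True then show ?thesis unfolding S_def T_def using c[OF True] \<rho>\<sigma> by simp
      next
        case False then show ?thesis unfolding S_def T_def using y cn unfolding Kn_def by simp
      qed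
    qed
  qed
  have bij: "bij_betw T (Kn n) (Kn n)" by (rule bij_betw_byWitness[OF ST TS TK SK])
  have add: "\<forall>x\<in>Kn n. \<forall>y\<in>Kn n. T (\<lambda>i. x i + y i) = (\<lambda>i. T x i + T y i)"
    unfolding T_def by (simp add: algebra_simps)
  have smul: "\<forall>c. \<forall>x\<in>Kn n. T (\<lambda>i. c * x i) = (\<lambda>i. c * T x i)"
    unfolding T_def by (simp add: algebra_simps)
  have nrm: "\<forall>x\<in>Kn n. wnorm v n s (T x) = wnorm v n t x"
  proof
    fix x :: "nat \<Rightarrow> 'a" assume x: "x \<in> Kn n"
    have "(\<lambda>k. s k * v (T x k)) ` {..<n} = (\<lambda>k. t (\<rho> k) * v (x (\<rho> k))) ` {..<n}"
    proof (rule image_cong[OF refl])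
      fix k assume k: "k \<in> {..<n}"
      have "s k * v (T x k) = s k * (t (\<rho> k) / s k) * v (x (\<rho> k))"
        unfolding T_def using vb(3)[OF nv] c k by simp
      also have "\<dots> = t (\<rho> k) * v (x (\<rho> k))" using sp k by force
      finally show "s k * v (T x k) = t (\<rho> k) * v (x (\<rho> k))" .
    qed
    also have "\<dots> = (\<lambda>i. t i * v (x i)) ` (\<rho> ` {..<n})" by (simp add: image_image)
    also have "\<rho> ` {..<n} = {..<n}" by (rule permutes_image[OF \<rho>p])
    finally show "wnorm v n s (T x) = wnorm v n t x" unfolding wnorm_def wnorm_set by simp
  qed
  show ?thesis unfolding isometric_iso_def using bij add smul nrm by blast
qed

theorem mainTheorem12:
  fixes v :: "'a::field \<Rightarrow> real" and n :: nat and t s :: "nat \<Rightarrow> real"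
  assumes "nonarch_abs v" and "nontrivial_abs v" and "complete_abs v"
    and "\<not> spherically_complete v"
    and "\<forall>i<n. t i > 0" and "\<forall>i<n. s i > 0"
  shows "isometric_iso v n t s \<longleftrightarrow>
    (\<exists>\<sigma>. \<sigma> permutes {..<n} \<and> (\<forall>i<n. t i / s (\<sigma> i) \<in> value_group v))"
proof
  assume iso: "isometric_iso v n t s"
  have iso2: "isometric_iso v n s t" by (rule iso_sym[OF iso])
  have "\<forall>r>0. card {i. i < n \<and> r / t i \<in> value_group v} = card {i. i < n \<and> r / s i \<in> value_group v}"
  proof (intro allI impI)
    fix r :: real assume r: "r > 0"
    show "card {i. i < n \<and> r / t i \<in> value_group v} = card {i. i < n \<and> r / s i \<in> value_group v}"
      by (rule antisym[OF iso_count_le[OF assms(1) assms(5) assms(6) r iso] iso_count_le[OF assms(1) assms(6) assms(5) r iso2]])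
  qed
  then show "\<exists>\<sigma>. \<sigma> permutes {..<n} \<and> (\<forall>i<n. t i / s (\<sigma> i) \<in> value_group v)"
    using perm_match[of "value_group v" n t s, OF vg_1[OF assms(1)] vg_mult[OF assms(1)] vg_inv[OF assms(1)] assms(5) assms(6)]
    by simp
next
  assume "\<exists>\<sigma>. \<sigma> permutes {..<n} \<and> (\<forall>i<n. t i / s (\<sigma> i) \<in> value_group v)"
  then obtain \<sigma> where "\<sigma> permutes {..<n}" "\<forall>i<n. t i / s (\<sigma> i) \<in> value_group v" by blast
  then show "isometric_iso v n t s" using iso_from_perm[OF assms(1) assms(5) assms(6)] by blast
qed

end
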